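(* Let $n\ge 2$ and $k\ge 1$ be integers with $k<n$. Then the cubical set $$\bigcup_{i=1}^k\ \bigcup_{j\in[n],\ j\neq i}\big|[\{i\},[n]\setminus\{j\}]\big|\subseteq\mathbb R^n$$ is acyclic.
   Context: $[n]=\{1,\dots,n\}$, and for $A\subseteq B\subseteq[n]$, $[A,B]=\{C: A\subseteq C\subseteq B\}$. Its geometric realization $|[A,B]|$ is $I_1\times\dots\times I_n\subseteq\mathbb R^n$ with $I_m=\{1\}$ if $m\in A$, $I_m=[0,1]$ if $m\in B\setminus A$, $I_m=\{0\}$ if $m\notin B$. A cubical set (finite union of elementary cubes, i.e. products of intervals $[a,b]$ with $a,b\in\mathbb Z$, $b-a\in\{0,1\}$) $X$ is acyclic if it is non-empty and connected and its cubical homology groups $H_i(X)$ are trivial for all $i\ge1$. *)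

theory Defs
  imports "HOL-Analysis.Analysis"
begin

text \<open>Points of R^n are functions nat => real vanishing
outside the coordinate set {1..n}. An elementary cube is given by its list of
intervals: coordinate m in {1..n} is the integer interval [fst (Q m), snd (Q m)]
of length 0 or 1; outside {1..n} we normalise to (0,0).\<close>

type_synonym cube = "nat \<Rightarrow> int \<times> int"
type_synonym point = "nat \<Rightarrow> real"

definition elementary_cube :: "nat \<Rightarrow> cube \<Rightarrow> bool" where
  "elementary_cube n Q \<longleftrightarrow>
     (\<forall>m\<in>{1..n}. snd (Q m) - fst (Q m) \<in> {0, 1}) \<and> (\<forall>m. m \<notin> {1..n} \<longrightarrow> Q m = (0, 0))"

definition realization :: "nat \<Rightarrow> cube \<Rightarrow> point set" where
  "realization n Q = {x. (\<forall>m\<in>{1..n}. real_of_int (fst (Q m)) \<le> x m \<and> x m \<le> real_of_int (snd (Q m)))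
                        \<and> (\<forall>m. m \<notin> {1..n} \<longrightarrow> x m = 0)}"

definition nondeg :: "nat \<Rightarrow> cube \<Rightarrow> nat set" where
  "nondeg n Q = {m\<in>{1..n}. fst (Q m) \<noteq> snd (Q m)}"

definition cube_dim :: "nat \<Rightarrow> cube \<Rightarrow> nat" where
  "cube_dim n Q = card (nondeg n Q)"

definition interval_cube :: "nat \<Rightarrow> nat set \<Rightarrow> nat set \<Rightarrow> cube" where
  "interval_cube n A B = (\<lambda>m. if m \<in> {1..n} then (if m \<in> A then (1, 1) else if m \<in> B then (0, 1) else (0, 0))
                              else (0, 0))"

definition cubes_of :: "nat \<Rightarrow> point set \<Rightarrow> nat \<Rightarrow> cube set" where
  "cubes_of n X i = {Q. elementary_cube n Q \<and> cube_dim n Q = i \<and> realization n Q \<subseteq> X}"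

definition chains :: "nat \<Rightarrow> point set \<Rightarrow> nat \<Rightarrow> (cube \<Rightarrow> int) set" where
  "chains n X i = {c. finite {Q. c Q \<noteq> 0} \<and> {Q. c Q \<noteq> 0} \<subseteq> cubes_of n X i}"

text \<open>Cubical boundary of an elementary cube (Kaczynski--Mischaikow--Mrozek):
  boundary of I_1 x ... x I_n is the sum over nondegenerate coordinates m of
  (-1)^(number of nondegenerate coordinates before m) times
  (I_1 x .. x [b] x .. x I_n  -  I_1 x .. x [a] x .. x I_n) where I_m = [a,b].\<close>
definition cube_boundary :: "nat \<Rightarrow> cube \<Rightarrow> cube \<Rightarrow> int" where
  "cube_boundary n Q P =
     (\<Sum>m\<in>nondeg n Q. (-1) ^ card {m'\<in>nondeg n Q. m' < m} *
        ((if P = Q(m := (snd (Q m), snd (Q m))) then 1 else 0)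
       - (if P = Q(m := (fst (Q m), fst (Q m))) then 1 else 0)))"

definition chain_boundary :: "nat \<Rightarrow> (cube \<Rightarrow> int) \<Rightarrow> (cube \<Rightarrow> int)" where
  "chain_boundary n c = (\<lambda>P. \<Sum>Q\<in>{Q. c Q \<noteq> 0}. c Q * cube_boundary n Q P)"

definition trivial_homology :: "nat \<Rightarrow> point set \<Rightarrow> nat \<Rightarrow> bool" where
  "trivial_homology n X i \<longleftrightarrow>
     (\<forall>c\<in>chains n X i. chain_boundary n c = (\<lambda>_. 0) \<longrightarrow>
        (\<exists>d\<in>chains n X (Suc i). chain_boundary n d = c))"

text \<open>Acyclic cubical set: non-empty, connected (as a subspace of R^n, here realised inside
the product topology on nat => real; X lies in the copy of R^n of functions vanishing off
{1..n}), and H_i(X) = 0 for all i >= 1.\<close>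
definition acyclic_cubical :: "nat \<Rightarrow> point set \<Rightarrow> bool" where
  "acyclic_cubical n X \<longleftrightarrow>
     X \<noteq> {} \<and> connectedin (product_topology (\<lambda>_. euclideanreal) UNIV) X \<and>
     (\<forall>i\<ge>1. trivial_homology n X i)"

end

theory Submission
  imports Defs
begin


definition UC :: "nat \<Rightarrow> cube set" where
  "UC n = {Q. (\<forall>m\<in>{1..n}. Q m \<in> {(0,0),(1,1),(0,1)}) \<and> (\<forall>m. m \<notin> {1..n} \<longrightarrow> Q m = (0,0))}"

lemma finite_UC: "finite (UC n)"
proof -
  let ?F = "(\<lambda>f m. if m \<in> {1..n} then f m else (0::int,0::int)) ` (PiE {1..n} (\<lambda>_. {(0::int,0::int),(1,1),(0,1)}))"
  have "UC n \<subseteq> ?F"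
  proof
    fix Q assume Q: "Q \<in> UC n"
    have "Q = (\<lambda>m. if m \<in> {1..n} then restrict Q {1..n} m else (0,0))"
      using Q by (auto simp: UC_def)
    moreover have "restrict Q {1..n} \<in> PiE {1..n} (\<lambda>_. {(0::int,0::int),(1,1),(0,1)})"
      using Q by (auto simp: UC_def)
    ultimately show "Q \<in> ?F" by blast
  qed
  moreover have "finite ?F" by (intro finite_imageI finite_PiE) auto
  ultimately show ?thesis by (rule finite_subset)
qed

lemma UC_upd: "Q \<in> UC n \<Longrightarrow> r \<in> {1..n} \<Longrightarrow> x \<in> {(0,0),(1,1),(0,1)} \<Longrightarrow> Q(r := x) \<in> UC n"
  by (auto simp: UC_def)

lemma nondeg_UC: "Q \<in> UC n \<Longrightarrow> nondeg n Q = {m\<in>{1..n}. Q m = (0,1)}"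
proof -
  assume Q: "Q \<in> UC n"
  have "fst (Q m) \<noteq> snd (Q m) \<longleftrightarrow> Q m = (0,1)" if "m \<in> {1..n}" for m
  proof -
    have "Q m \<in> {(0,0),(1,1),(0,1)}" using Q that by (simp add: UC_def)
    then show ?thesis by auto
  qed
  then show ?thesis by (auto simp: nondeg_def)
qed

lemma finite_nondeg: "finite (nondeg n Q)"
  by (simp add: nondeg_def)

lemma nondeg_ext: "Q \<in> UC n \<Longrightarrow> r \<in> {1..n} \<Longrightarrow> nondeg n (Q(r := (0,1))) = insert r (nondeg n Q)"
  by (auto simp: nondeg_def UC_def)

lemma nondeg_deg: "nondeg n (Q(r := (a,a))) = nondeg n Q - {r}"
  by (auto simp: nondeg_def)

definition sg :: "nat set \<Rightarrow> nat \<Rightarrow> int" where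
  "sg N m = (-1) ^ card {m'\<in>N. m' < m}"

lemma sg_sq: "sg N m * sg N m = 1"
  by (simp add: sg_def power_mult_distrib[symmetric])

lemma sg_insert: "finite N \<Longrightarrow> r \<notin> N \<Longrightarrow> r \<noteq> m \<Longrightarrow> sg (insert r N) m = (if r < m then -1 else 1) * sg N m"
proof -
  assume f: "finite N" and r: "r \<notin> N" "r \<noteq> m"
  show ?thesis
  proof (cases "r < m")
    case True
    have "{m'\<in>insert r N. m' < m} = insert r {m'\<in>N. m' < m}" using True by auto
    moreover have "card (insert r {m'\<in>N. m' < m}) = Suc (card {m'\<in>N. m' < m})"
      using f r by simp
    ultimately show ?thesis using True by (simp add: sg_def)
  next
    case False
    have "{m'\<in>insert r N. m' < m} = {m'\<in>N. m' < m}" using False by auto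
    then show ?thesis using False by (simp add: sg_def)
  qed
qed

lemma sg_insert_same: "sg (insert r N) r = sg N r"
proof -
  have "{m'\<in>insert r N. m' < r} = {m'\<in>N. m' < r}" by auto
  then show ?thesis by (simp add: sg_def)
qed

lemma sg_remove_same: "sg (N - {r}) r = sg N r"
proof -
  have "{m'\<in>N - {r}. m' < r} = {m'\<in>N. m' < r}" by auto
  then show ?thesis by (simp add: sg_def)
qed

lemma sg_remove: "finite N \<Longrightarrow> m \<in> N \<Longrightarrow> r \<noteq> m \<Longrightarrow> sg (N - {m}) r = (if m < r then -1 else 1) * sg N r"
proof -
  assume f: "finite N" and m: "m \<in> N" "r \<noteq> m"
  have "sg N r = sg (insert m (N - {m})) r" using m by (simp add: insert_absorb)
  also have "\<dots> = (if m < r then -1 else 1) * sg (N - {m}) r"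
    using f m by (intro sg_insert) auto
  finally show ?thesis by auto
qed

lemma cb_UC: "Q \<in> UC n \<Longrightarrow> cube_boundary n Q P =
   (\<Sum>m\<in>nondeg n Q. sg (nondeg n Q) m * ((if P = Q(m := (1,1)) then 1 else 0) - (if P = Q(m := (0,0)) then 1 else 0)))"
  unfolding cube_boundary_def sg_def
  by (intro sum.cong refl) (auto simp: nondeg_UC)

lemma bd_pair:
  assumes Q: "Q \<in> UC n"
  shows "(\<Sum>Q'\<in>UC n. cube_boundary n Q Q' * g Q') =
     (\<Sum>m\<in>nondeg n Q. sg (nondeg n Q) m * (g (Q(m := (1,1))) - g (Q(m := (0,0)))))"
proof -
  have "(\<Sum>Q'\<in>UC n. cube_boundary n Q Q' * g Q') =
     (\<Sum>Q'\<in>UC n. \<Sum>m\<in>nondeg n Q. sg (nondeg n Q) m * ((if Q' = Q(m := (1,1)) then g Q' else 0) - (if Q' = Q(m := (0,0)) then g Q' else 0)))"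
    using Q unfolding cb_UC[OF Q] sum_distrib_right
    by (intro sum.cong refl) (auto simp: algebra_simps)
  also have "\<dots> = (\<Sum>m\<in>nondeg n Q. \<Sum>Q'\<in>UC n. sg (nondeg n Q) m * ((if Q' = Q(m := (1,1)) then g Q' else 0) - (if Q' = Q(m := (0,0)) then g Q' else 0)))"
    by (rule sum.swap)
  also have "\<dots> = (\<Sum>m\<in>nondeg n Q. sg (nondeg n Q) m * (g (Q(m := (1,1))) - g (Q(m := (0,0)))))"
  proof (intro sum.cong refl)
    fix m assume m: "m \<in> nondeg n Q"
    then have "m \<in> {1..n}" by (simp add: nondeg_def)
    then have "Q(m := (1,1)) \<in> UC n" "Q(m := (0,0)) \<in> UC n" using Q by (auto intro: UC_upd)
    then show "(\<Sum>Q'\<in>UC n. sg (nondeg n Q) m * ((if Q' = Q(m := (1,1)) then g Q' else 0) - (if Q' = Q(m := (0,0)) then g Q' else 0)))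
       = sg (nondeg n Q) m * (g (Q(m := (1,1))) - g (Q(m := (0,0))))"
      by (simp add: sum_distrib_left[symmetric] sum_subtractf finite_UC)
  qed
  finally show ?thesis .
qed

definition hc :: "nat \<Rightarrow> nat \<Rightarrow> int \<Rightarrow> cube \<Rightarrow> cube \<Rightarrow> int" where
  "hc n r v Q P = (if Q r = (1-v,1-v) \<and> P = Q(r := (0,1)) then (if v = 0 then 1 else -1) * sg (nondeg n Q) r else 0)"

definition pc :: "nat \<Rightarrow> int \<Rightarrow> cube \<Rightarrow> cube \<Rightarrow> int" where
  "pc r v Q P = (if fst (Q r) = snd (Q r) \<and> P = Q(r := (v,v)) then 1 else 0)"

lemma sum_delta_UC:
  assumes "X \<in> UC n"
  shows "(\<Sum>Q'\<in>UC n. (if Q' = X then a else 0) * f Q') = (a::int) * f X"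
proof -
  have "(\<Sum>Q'\<in>UC n. (if Q' = X then a else 0) * f Q') = (\<Sum>Q'\<in>UC n. if Q' = X then a * f X else 0)"
    by (intro sum.cong) auto
  also have "\<dots> = a * f X" using assms finite_UC by (simp add: sum.delta)
  finally show ?thesis .
qed

lemma htpy:
  assumes Q: "Q \<in> UC n" and r: "r \<in> {1..n}" and v: "v \<in> {0,1}"
  shows "(\<Sum>Q'\<in>UC n. hc n r v Q Q' * cube_boundary n Q' P) + (\<Sum>Q'\<in>UC n. cube_boundary n Q Q' * hc n r v Q' P)
     = (if P = Q then 1 else 0) - pc r v Q P"
proof -
  define N where "N = nondeg n Q"
  define e :: int where "e = (if v = 0 then 1 else -1)"
  have fN: "finite N" by (simp add: N_def finite_nondeg)
  have S2: "(\<Sum>Q'\<in>UC n. cube_boundary n Q Q' * hc n r v Q' P) =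
     (\<Sum>m\<in>N. sg N m * (hc n r v (Q(m := (1,1))) P - hc n r v (Q(m := (0,0))) P))"
    unfolding N_def by (rule bd_pair[OF Q])
  have EU: "Q(r := (0,1)) \<in> UC n" using Q r by (intro UC_upd) auto
  have S1: "(\<Sum>Q'\<in>UC n. hc n r v Q Q' * cube_boundary n Q' P) =
     (if Q r = (1-v,1-v) then e * sg N r * cube_boundary n (Q(r := (0,1))) P else 0)"
  proof -
    have "(\<Sum>Q'\<in>UC n. hc n r v Q Q' * cube_boundary n Q' P) =
        (\<Sum>Q'\<in>UC n. (if Q' = Q(r := (0,1)) then (if Q r = (1-v,1-v) then e * sg N r else 0) else 0) * cube_boundary n Q' P)"
      by (intro sum.cong refl) (auto simp: hc_def e_def N_def)
    also have "\<dots> = (if Q r = (1-v,1-v) then e * sg N r else 0) * cube_boundary n (Q(r := (0,1))) P"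
      by (rule sum_delta_UC[OF EU])
    finally show ?thesis by simp
  qed
  have Qr: "Q r \<in> {(0,0),(1,1),(0,1)}" using Q r by (simp add: UC_def)
  have memN: "m \<in> N \<longleftrightarrow> m \<in> {1..n} \<and> Q m = (0,1)" for m
    using nondeg_UC[OF Q] by (simp add: N_def)
  consider (A) "Q r = (1-v,1-v)" | (B) "Q r = (v,v)" | (C) "Q r = (0,1)" using Qr v by auto
  then show ?thesis
  proof cases
    case A
    have rN: "r \<notin> N" using A v memN by auto
    have NE: "nondeg n (Q(r := (0,1))) = insert r N" unfolding N_def by (rule nondeg_ext[OF Q r])
    have bE: "cube_boundary n (Q(r := (0,1))) P =
       sg N r * ((if P = Q(r := (1,1)) then 1 else 0) - (if P = Q(r := (0,0)) then 1 else 0)) +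
       (\<Sum>m\<in>N. (if r < m then -1 else 1) * sg N m *
          ((if P = Q(m := (1,1), r := (0,1)) then 1 else 0) - (if P = Q(m := (0,0), r := (0,1)) then 1 else 0)))"
    proof -
      have "cube_boundary n (Q(r := (0,1))) P = (\<Sum>m\<in>insert r N. sg (insert r N) m *
          ((if P = Q(r := (0,1), m := (1,1)) then 1 else 0) - (if P = Q(r := (0,1), m := (0,0)) then 1 else 0)))"
        using cb_UC[OF EU, of P] NE by simp
      also have "\<dots> = sg (insert r N) r *
          ((if P = Q(r := (0,1), r := (1,1)) then 1 else 0) - (if P = Q(r := (0,1), r := (0,0)) then 1 else 0)) +
          (\<Sum>m\<in>N. sg (insert r N) m *
          ((if P = Q(r := (0,1), m := (1,1)) then 1 else 0) - (if P = Q(r := (0,1), m := (0,0)) then 1 else 0)))"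
        using fN rN by (simp add: sum.insert)
      also have "\<dots> = sg N r * ((if P = Q(r := (1,1)) then 1 else 0) - (if P = Q(r := (0,0)) then 1 else 0)) +
       (\<Sum>m\<in>N. (if r < m then -1 else 1) * sg N m *
          ((if P = Q(m := (1,1), r := (0,1)) then 1 else 0) - (if P = Q(m := (0,0), r := (0,1)) then 1 else 0)))"
      proof -
        have "sg (insert r N) m *
          ((if P = Q(r := (0,1), m := (1,1)) then 1 else 0) - (if P = Q(r := (0,1), m := (0,0)) then 1 else 0))
          = (if r < m then -1 else 1) * sg N m *
          ((if P = Q(m := (1,1), r := (0,1)) then 1 else 0) - (if P = Q(m := (0,0), r := (0,1)) then 1 else 0))"
          if "m \<in> N" for m
        proof -
          have "m \<noteq> r" using that rN by auto
          then show ?thesis using sg_insert[OF fN rN, of m] by (simp add: fun_upd_twist)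
        qed
        then show ?thesis by (simp add: sg_insert_same)
      qed
      finally show ?thesis .
    qed
    have h1: "hc n r v (Q(m := (a,a))) P = (if P = Q(m := (a,a), r := (0,1)) then e * ((if m < r then -1 else 1) * sg N r) else 0)"
      if "m \<in> N" for m a
    proof -
      have "m \<noteq> r" using that rN by auto
      moreover have "nondeg n (Q(m := (a,a))) = N - {m}" by (simp add: nondeg_deg N_def)
      ultimately show ?thesis using A sg_remove[OF fN that, of r] by (auto simp: hc_def e_def)
    qed
    have S2': "(\<Sum>m\<in>N. sg N m * (hc n r v (Q(m := (1,1))) P - hc n r v (Q(m := (0,0))) P)) =
       - e * sg N r * (\<Sum>m\<in>N. (if r < m then -1 else 1) * sg N m *
          ((if P = Q(m := (1,1), r := (0,1)) then 1 else 0) - (if P = Q(m := (0,0), r := (0,1)) then 1 else 0)))"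
      unfolding sum_distrib_left
    proof (intro sum.cong refl)
      fix m assume m: "m \<in> N"
      have "m \<noteq> r" using m rN by auto
      then have "(if m < r then -1 else 1) = - (if r < m then -1 else (1::int))" by auto
      then show "sg N m * (hc n r v (Q(m := (1,1))) P - hc n r v (Q(m := (0,0))) P) =
         - e * sg N r * ((if r < m then -1 else 1) * sg N m *
          ((if P = Q(m := (1,1), r := (0,1)) then 1 else 0) - (if P = Q(m := (0,0), r := (0,1)) then 1 else 0)))"
        using h1[OF m, of 1] h1[OF m, of 0] by (simp add: algebra_simps)
    qed
    have ss: "e * sg N r * sg N r = e" using sg_sq[of N r] by (simp add: mult.assoc)
    show ?thesis
    proof -
      have "(\<Sum>Q'\<in>UC n. hc n r v Q Q' * cube_boundary n Q' P) + (\<Sum>Q'\<in>UC n. cube_boundary n Q Q' * hc n r v Q' P)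
        = e * sg N r * sg N r * ((if P = Q(r := (1,1)) then 1 else 0) - (if P = Q(r := (0,0)) then 1 else 0))"
      proof -
        have alg: "\<And>X D. e * sg N r * (sg N r * X + D) + (- e * sg N r * D) = e * sg N r * sg N r * X"
          by (simp add: algebra_simps)
        show ?thesis unfolding S1 S2 S2' using A by (simp only: bE alg if_True refl)
      qed
      also have "\<dots> = e * ((if P = Q(r := (1,1)) then 1 else 0) - (if P = Q(r := (0,0)) then 1 else 0))"
        using ss by simp
      also have "\<dots> = (if P = Q then 1 else 0) - pc r v Q P"
      proof -
        have ne: "Q(r := (1,1)) \<noteq> Q(r := (0,0))" by (metis fun_upd_same prod.inject zero_neq_one)
        show ?thesis using v A ne by (auto simp: e_def pc_def)
      qed
      finally show ?thesis .
    qed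
  next
    case B
    have rN: "r \<notin> N" using B v memN by auto
    have "Q r \<noteq> (1-v,1-v)" using B v by auto
    then have z1: "(\<Sum>Q'\<in>UC n. hc n r v Q Q' * cube_boundary n Q' P) = 0" using S1 by simp
    have "hc n r v (Q(m := (a,a))) P = 0" if "m \<in> N" for m a
      using that rN B v by (auto simp: hc_def)
    then have z2: "(\<Sum>Q'\<in>UC n. cube_boundary n Q Q' * hc n r v Q' P) = 0" unfolding S2 by simp
    have "pc r v Q P = (if P = Q then 1 else 0)" using B by (auto simp: pc_def)
    then show ?thesis using z1 z2 by simp
  next
    case C
    have rN: "r \<in> N" using C r memN by auto
    have z1: "(\<Sum>Q'\<in>UC n. hc n r v Q Q' * cube_boundary n Q' P) = 0" using S1 C v by auto
    have z: "sg N m * (hc n r v (Q(m := (1,1))) P - hc n r v (Q(m := (0,0))) P) = 0" if "m \<in> N - {r}" for m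
      using that C by (auto simp: hc_def)
    have "(\<Sum>m\<in>N. sg N m * (hc n r v (Q(m := (1,1))) P - hc n r v (Q(m := (0,0))) P))
       = sg N r * (hc n r v (Q(r := (1,1))) P - hc n r v (Q(r := (0,0))) P) +
         (\<Sum>m\<in>N - {r}. sg N m * (hc n r v (Q(m := (1,1))) P - hc n r v (Q(m := (0,0))) P))"
      using fN rN by (simp add: sum.remove)
    also have "\<dots> = sg N r * (hc n r v (Q(r := (1,1))) P - hc n r v (Q(r := (0,0))) P)"
      using z by (simp add: sum.neutral)
    also have "\<dots> = (if P = Q then 1 else 0)"
    proof -
      have nd: "nondeg n (Q(r := (a,a))) = N - {r}" for a by (simp add: nondeg_deg N_def)
      have QQ: "Q(r := (0,1)) = Q" using C by auto
      show ?thesis using v sg_sq[of N r]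
        by (auto simp: hc_def nd sg_remove_same QQ)
    qed
    finally have "(\<Sum>Q'\<in>UC n. cube_boundary n Q Q' * hc n r v Q' P) = (if P = Q then 1 else 0)"
      using S2 by simp
    moreover have "pc r v Q P = 0" using C by (simp add: pc_def)
    ultimately show ?thesis using z1 by simp
  qed
qed

lemma chmap:
  assumes Q: "Q \<in> UC n" and r: "r \<in> {1..n}" and v: "v \<in> {0,1}"
  shows "(\<Sum>Q'\<in>UC n. pc r v Q Q' * cube_boundary n Q' P) = (\<Sum>Q'\<in>UC n. cube_boundary n Q Q' * pc r v Q' P)"
proof -
  define N where "N = nondeg n Q"
  have fN: "finite N" by (simp add: N_def finite_nondeg)
  have S2: "(\<Sum>Q'\<in>UC n. cube_boundary n Q Q' * pc r v Q' P) =
     (\<Sum>m\<in>N. sg N m * (pc r v (Q(m := (1,1))) P - pc r v (Q(m := (0,0))) P))"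
    unfolding N_def by (rule bd_pair[OF Q])
  have EU: "Q(r := (v,v)) \<in> UC n" using Q r v by (intro UC_upd) auto
  have S1: "(\<Sum>Q'\<in>UC n. pc r v Q Q' * cube_boundary n Q' P) =
     (if fst (Q r) = snd (Q r) then cube_boundary n (Q(r := (v,v))) P else 0)"
  proof -
    have "(\<Sum>Q'\<in>UC n. pc r v Q Q' * cube_boundary n Q' P) =
        (\<Sum>Q'\<in>UC n. (if Q' = Q(r := (v,v)) then (if fst (Q r) = snd (Q r) then 1 else 0) else 0) * cube_boundary n Q' P)"
      by (intro sum.cong refl) (auto simp: pc_def)
    also have "\<dots> = (if fst (Q r) = snd (Q r) then 1 else 0) * cube_boundary n (Q(r := (v,v))) P"
      by (rule sum_delta_UC[OF EU])
    finally show ?thesis by simp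
  qed
  have Qr: "Q r \<in> {(0,0),(1,1),(0,1)}" using Q r by (simp add: UC_def)
  have memN: "m \<in> N \<longleftrightarrow> m \<in> {1..n} \<and> Q m = (0,1)" for m
    using nondeg_UC[OF Q] by (simp add: N_def)
  show ?thesis
  proof (cases "fst (Q r) = snd (Q r)")
    case True
    have rN: "r \<notin> N" using True memN by auto
    have NE: "nondeg n (Q(r := (v,v))) = N" using rN by (simp add: nondeg_deg N_def)
    have "cube_boundary n (Q(r := (v,v))) P = (\<Sum>m\<in>N. sg N m *
          ((if P = Q(r := (v,v), m := (1,1)) then 1 else 0) - (if P = Q(r := (v,v), m := (0,0)) then 1 else 0)))"
      using cb_UC[OF EU, of P] NE by simp
    also have "\<dots> = (\<Sum>m\<in>N. sg N m * (pc r v (Q(m := (1,1))) P - pc r v (Q(m := (0,0))) P))"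
    proof (intro sum.cong refl)
      fix m assume m: "m \<in> N"
      then have "m \<noteq> r" using rN by auto
      then show "sg N m * ((if P = Q(r := (v,v), m := (1,1)) then 1 else 0) - (if P = Q(r := (v,v), m := (0,0)) then 1 else 0))
          = sg N m * (pc r v (Q(m := (1,1))) P - pc r v (Q(m := (0,0))) P)"
        using True by (simp add: pc_def fun_upd_twist)
    qed
    finally show ?thesis using S1 S2 True by simp
  next
    case False
    have Qr01: "Q r = (0,1)" using False Qr by auto
    have rN: "r \<in> N" using Qr01 r memN by simp
    have z: "sg N m * (pc r v (Q(m := (1,1))) P - pc r v (Q(m := (0,0))) P) = 0" if "m \<in> N - {r}" for m
    proof -
      have "m \<noteq> r" using that by auto
      then have "pc r v (Q(m := (1,1))) P = 0" "pc r v (Q(m := (0,0))) P = 0"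
        using Qr01 by (simp_all add: pc_def)
      then show ?thesis by simp
    qed
    have e1: "(\<Sum>m\<in>N. sg N m * (pc r v (Q(m := (1,1))) P - pc r v (Q(m := (0,0))) P))
       = sg N r * (pc r v (Q(r := (1,1))) P - pc r v (Q(r := (0,0))) P) +
         (\<Sum>m\<in>N - {r}. sg N m * (pc r v (Q(m := (1,1))) P - pc r v (Q(m := (0,0))) P))"
      using fN rN by (simp add: sum.remove)
    have e2: "(\<Sum>m\<in>N - {r}. sg N m * (pc r v (Q(m := (1,1))) P - pc r v (Q(m := (0,0))) P)) = 0"
      using z by (intro sum.neutral) blast
    have e3: "pc r v (Q(r := (1,1))) P - pc r v (Q(r := (0,0))) P = 0"
      by (simp add: pc_def)
    have s0: "(\<Sum>m\<in>N. sg N m * (pc r v (Q(m := (1,1))) P - pc r v (Q(m := (0,0))) P)) = 0"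
      unfolding e1 e2 e3 by simp
    show ?thesis unfolding S1 S2 s0 using False by simp
  qed
qed

definition lin :: "nat \<Rightarrow> (cube \<Rightarrow> cube \<Rightarrow> int) \<Rightarrow> (cube \<Rightarrow> int) \<Rightarrow> (cube \<Rightarrow> int)" where
  "lin n f c = (\<lambda>P. \<Sum>Q\<in>UC n. c Q * f Q P)"

lemma cb_lin: "{Q. c Q \<noteq> 0} \<subseteq> UC n \<Longrightarrow> chain_boundary n c = lin n (cube_boundary n) c"
  unfolding chain_boundary_def lin_def
  by (intro ext sum.mono_neutral_left finite_UC) auto

lemma lin_comp: "lin n f (lin n g c) = lin n (\<lambda>Q P. \<Sum>Q'\<in>UC n. g Q Q' * f Q' P) c"
proof (rule ext)
  fix P
  have "lin n f (lin n g c) P = (\<Sum>Q'\<in>UC n. \<Sum>Q\<in>UC n. c Q * g Q Q' * f Q' P)"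
    by (simp add: lin_def sum_distrib_right)
  also have "\<dots> = (\<Sum>Q\<in>UC n. \<Sum>Q'\<in>UC n. c Q * g Q Q' * f Q' P)" by (rule sum.swap)
  also have "\<dots> = lin n (\<lambda>Q P. \<Sum>Q'\<in>UC n. g Q Q' * f Q' P) c P"
    by (simp add: lin_def sum_distrib_left mult.assoc)
  finally show "lin n f (lin n g c) P = lin n (\<lambda>Q P. \<Sum>Q'\<in>UC n. g Q Q' * f Q' P) c P" .
qed

lemma lin_supp: "{P. lin n f c P \<noteq> 0} \<subseteq> {P. \<exists>Q\<in>UC n. c Q \<noteq> 0 \<and> f Q P \<noteq> 0}"
proof
  fix P assume "P \<in> {P. lin n f c P \<noteq> 0}"
  then have "(\<Sum>Q\<in>UC n. c Q * f Q P) \<noteq> 0" by (simp add: lin_def)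
  then obtain Q where "Q \<in> UC n" "c Q * f Q P \<noteq> 0" using sum.neutral[of "UC n" "\<lambda>Q. c Q * f Q P"] by blast
  then show "P \<in> {P. \<exists>Q\<in>UC n. c Q \<noteq> 0 \<and> f Q P \<noteq> 0}" by auto
qed

lemma lin_zero: "lin n f (\<lambda>_. 0) = (\<lambda>_. 0)"
  by (simp add: lin_def)

lemma lin_add: "lin n f (\<lambda>Q. c Q + d Q) = (\<lambda>P. lin n f c P + lin n f d P)"
  by (simp add: lin_def algebra_simps sum.distrib)

lemma lin_id: "{Q. c Q \<noteq> 0} \<subseteq> UC n \<Longrightarrow> lin n (\<lambda>Q P. if P = Q then 1 else 0) c = c"
proof (rule ext)
  fix P assume s: "{Q. c Q \<noteq> 0} \<subseteq> UC n"
  have "lin n (\<lambda>Q P. if P = Q then 1 else 0) c P = (\<Sum>Q\<in>UC n. if Q = P then c P else 0)"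
    by (simp add: lin_def) (intro sum.cong refl, auto)
  also have "\<dots> = c P" using s finite_UC by (auto simp: sum.delta)
  finally show "lin n (\<lambda>Q P. if P = Q then 1 else 0) c P = c P" .
qed

definition acyc :: "nat \<Rightarrow> cube set \<Rightarrow> bool" where
  "acyc n S \<longleftrightarrow> (\<forall>i\<ge>1. \<forall>c. {Q. c Q \<noteq> 0} \<subseteq> {Q\<in>S. cube_dim n Q = i} \<longrightarrow> chain_boundary n c = (\<lambda>_. 0) \<longrightarrow>
      (\<exists>d. {Q. d Q \<noteq> 0} \<subseteq> {Q\<in>S. cube_dim n Q = Suc i} \<and> chain_boundary n d = c))"

lemma step:
  assumes SU: "S \<subseteq> UC n" and TS: "T \<subseteq> S" and r: "r \<in> {1..n}" and v: "v \<in> {0,1}"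
    and extS: "\<And>Q. Q \<in> S \<Longrightarrow> Q r = (1-v,1-v) \<Longrightarrow> Q(r := (0,1)) \<in> S"
    and proj: "\<And>Q. Q \<in> S \<Longrightarrow> fst (Q r) = snd (Q r) \<Longrightarrow> Q(r := (v,v)) \<in> T"
    and aT: "acyc n T"
  shows "acyc n S"
  unfolding acyc_def
proof (intro allI impI)
  fix i c assume i: "1 \<le> i" and sc: "{Q. c Q \<noteq> 0} \<subseteq> {Q\<in>S. cube_dim n Q = i}"
    and cyc: "chain_boundary n c = (\<lambda>_. 0)"
  have scU: "{Q. c Q \<noteq> 0} \<subseteq> UC n" using sc SU by auto
  define H where "H = lin n (hc n r v) c"
  define Pc where "Pc = lin n (pc r v) c"
  have sH: "{P. H P \<noteq> 0} \<subseteq> {Q\<in>S. cube_dim n Q = Suc i}"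
  proof
    fix P assume "P \<in> {P. H P \<noteq> 0}"
    then obtain Q where Q: "Q \<in> UC n" "c Q \<noteq> 0" "hc n r v Q P \<noteq> 0"
      using lin_supp[of n "hc n r v" c] unfolding H_def by blast
    then have QS: "Q \<in> S" "cube_dim n Q = i" using sc by auto
    have Qr: "Q r = (1-v,1-v)" "P = Q(r := (0,1))" using Q(3) by (auto simp: hc_def split: if_splits)
    have "r \<notin> nondeg n Q" using Qr by (simp add: nondeg_def)
    then have "cube_dim n P = Suc i" using Qr(2) QS(2) nondeg_ext[OF Q(1) r]
      by (simp add: cube_dim_def finite_nondeg)
    then show "P \<in> {Q\<in>S. cube_dim n Q = Suc i}" using extS[OF QS(1) Qr(1)] Qr(2) by simp
  qed
  have sP: "{P. Pc P \<noteq> 0} \<subseteq> {Q\<in>T. cube_dim n Q = i}"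
  proof
    fix P assume "P \<in> {P. Pc P \<noteq> 0}"
    then obtain Q where Q: "Q \<in> UC n" "c Q \<noteq> 0" "pc r v Q P \<noteq> 0"
      using lin_supp[of n "pc r v" c] unfolding Pc_def by blast
    then have QS: "Q \<in> S" "cube_dim n Q = i" using sc by auto
    have Qr: "fst (Q r) = snd (Q r)" "P = Q(r := (v,v))" using Q(3) by (auto simp: pc_def split: if_splits)
    have "r \<notin> nondeg n Q" using Qr by (simp add: nondeg_def)
    then have "cube_dim n P = i" using Qr(2) QS(2) nondeg_deg[of n Q r v]
      by (simp add: cube_dim_def)
    then show "P \<in> {Q\<in>T. cube_dim n Q = i}" using proj[OF QS(1) Qr(1)] Qr(2) by simp
  qed
  have HU: "{P. H P \<noteq> 0} \<subseteq> UC n" using sH SU by auto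
  have PU: "{P. Pc P \<noteq> 0} \<subseteq> UC n" using sP SU TS by auto
  have lc: "lin n (cube_boundary n) c = (\<lambda>_. 0)" using cyc cb_lin[OF scU] by simp
  have bH: "chain_boundary n H = (\<lambda>P. c P - Pc P)"
  proof -
    have "chain_boundary n H = lin n (cube_boundary n) H" using cb_lin[OF HU] .
    also have "\<dots> = (\<lambda>P. lin n (cube_boundary n) H P + lin n (hc n r v) (lin n (cube_boundary n) c) P)"
      using lc by (simp add: lin_zero)
    also have "\<dots> = lin n (\<lambda>Q P. (if P = Q then 1 else 0) - pc r v Q P) c"
    proof (rule ext)
      fix P
      show "lin n (cube_boundary n) H P + lin n (hc n r v) (lin n (cube_boundary n) c) P =
         lin n (\<lambda>Q P. (if P = Q then 1 else 0) - pc r v Q P) c P"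
      proof -
        have "lin n (cube_boundary n) H P + lin n (hc n r v) (lin n (cube_boundary n) c) P
          = (\<Sum>Q\<in>UC n. c Q * (\<Sum>Q'\<in>UC n. hc n r v Q Q' * cube_boundary n Q' P) +
                          c Q * (\<Sum>Q'\<in>UC n. cube_boundary n Q Q' * hc n r v Q' P))"
          unfolding H_def lin_comp by (simp add: lin_def sum.distrib)
        also have "\<dots> = (\<Sum>Q\<in>UC n. c Q * ((if P = Q then 1 else 0) - pc r v Q P))"
        proof (intro sum.cong refl)
          fix Q assume Q: "Q \<in> UC n"
          show "c Q * (\<Sum>Q'\<in>UC n. hc n r v Q Q' * cube_boundary n Q' P) +
                          c Q * (\<Sum>Q'\<in>UC n. cube_boundary n Q Q' * hc n r v Q' P) =
                c Q * ((if P = Q then 1 else 0) - pc r v Q P)"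
            unfolding distrib_left[symmetric] htpy[OF Q r v] ..
        qed
        finally show ?thesis by (simp add: lin_def)
      qed
    qed
    also have "\<dots> = (\<lambda>P. lin n (\<lambda>Q P. if P = Q then 1 else 0) c P - Pc P)"
      by (rule ext) (simp only: lin_def Pc_def right_diff_distrib sum_subtractf)
    also have "\<dots> = (\<lambda>P. c P - Pc P)" using lin_id[OF scU] by simp
    finally show ?thesis .
  qed
  have cycP: "chain_boundary n Pc = (\<lambda>_. 0)"
  proof -
    have "chain_boundary n Pc = lin n (cube_boundary n) (lin n (pc r v) c)"
      using cb_lin[OF PU] by (simp add: Pc_def)
    also have "\<dots> = lin n (pc r v) (lin n (cube_boundary n) c)"
      unfolding lin_comp
      by (rule ext, unfold lin_def, intro sum.cong refl) (simp only: chmap r v)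
    also have "\<dots> = (\<lambda>_. 0)" using lc by (simp add: lin_zero)
    finally show ?thesis .
  qed
  have "{Q. Pc Q \<noteq> 0} \<subseteq> {Q\<in>T. cube_dim n Q = i}" using sP .
  then obtain d' where d': "{Q. d' Q \<noteq> 0} \<subseteq> {Q\<in>T. cube_dim n Q = Suc i}" "chain_boundary n d' = Pc"
    using aT i cycP unfolding acyc_def by blast
  have d'U: "{Q. d' Q \<noteq> 0} \<subseteq> UC n" using d'(1) TS SU by auto
  define d where "d = (\<lambda>Q. d' Q + H Q)"
  have sd: "{Q. d Q \<noteq> 0} \<subseteq> {Q\<in>S. cube_dim n Q = Suc i}"
  proof
    fix Q assume "Q \<in> {Q. d Q \<noteq> 0}"
    then have "d' Q \<noteq> 0 \<or> H Q \<noteq> 0" unfolding d_def by auto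
    then show "Q \<in> {Q\<in>S. cube_dim n Q = Suc i}" using d'(1) sH TS by blast
  qed
  have dU: "{Q. d Q \<noteq> 0} \<subseteq> UC n" using sd SU by auto
  have "chain_boundary n d = (\<lambda>P. chain_boundary n d' P + chain_boundary n H P)"
    unfolding cb_lin[OF dU] cb_lin[OF d'U] cb_lin[OF HU] by (simp add: d_def lin_add)
  also have "\<dots> = c" unfolding d'(2) bH by simp
  finally show "\<exists>d. {Q. d Q \<noteq> 0} \<subseteq> {Q\<in>S. cube_dim n Q = Suc i} \<and> chain_boundary n d = c"
    using sd by blast
qed



definition bx :: "nat \<Rightarrow> nat \<Rightarrow> nat \<Rightarrow> point set" where
  "bx n i j = {x. (\<forall>m\<in>{1..n}. 0 \<le> x m \<and> x m \<le> 1) \<and> x i = 1 \<and> x j = 0 \<and> (\<forall>m. m \<notin> {1..n} \<longrightarrow> x m = 0)}"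

lemma real_ic:
  assumes "i \<in> {1..n}" "j \<in> {1..n}" "i \<noteq> j"
  shows "realization n (interval_cube n {i} ({1..n} - {j})) = bx n i j"
proof -
  have "x \<in> realization n (interval_cube n {i} ({1..n} - {j})) \<longleftrightarrow> x \<in> bx n i j" for x
  proof
    assume x: "x \<in> realization n (interval_cube n {i} ({1..n} - {j}))"
    have c: "\<And>m. m \<in> {1..n} \<Longrightarrow> real_of_int (fst (interval_cube n {i} ({1..n} - {j}) m)) \<le> x m \<and> x m \<le> real_of_int (snd (interval_cube n {i} ({1..n} - {j}) m))"
      using x by (simp add: realization_def)
    have "0 \<le> x m \<and> x m \<le> 1" if "m \<in> {1..n}" for m
      using c[OF that] that by (auto simp: interval_cube_def split: if_splits)
    moreover have "x i = 1" using c[OF assms(1)] assms by (auto simp: interval_cube_def)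
    moreover have "x j = 0" using c[OF assms(2)] assms by (auto simp: interval_cube_def)
    ultimately show "x \<in> bx n i j" using x by (simp add: bx_def realization_def)
  next
    assume x: "x \<in> bx n i j"
    show "x \<in> realization n (interval_cube n {i} ({1..n} - {j}))"
      using x assms by (auto simp: bx_def realization_def interval_cube_def)
  qed
  then show ?thesis by blast
qed

lemma coord01:
  fixes a b :: int
  assumes "b - a \<in> {0,1}" "0 \<le> (real_of_int a + real_of_int b) / 2" "(real_of_int a + real_of_int b) / 2 \<le> 1"
  shows "(a,b) \<in> {(0,0),(1,1),(0,1)}"
proof -
  have "0 \<le> real_of_int (a + b)" "real_of_int (a + b) \<le> 2" using assms(2,3) by auto
  then have "0 \<le> a + b" "a + b \<le> 2" by linarith+
  then show ?thesis using assms(1) by auto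
qed

definition S0 :: "nat \<Rightarrow> nat \<Rightarrow> cube set" where
  "S0 n k = {Q\<in>UC n. (\<exists>i\<in>{1..k}. Q i = (1,1)) \<and> (\<exists>j\<in>{1..n}. Q j = (0,0))}"

definition XX :: "nat \<Rightarrow> nat \<Rightarrow> point set" where
  "XX n k = (\<Union>i\<in>{1..k}. \<Union>j\<in>{1..n} - {i}. realization n (interval_cube n {i} ({1..n} - {j})))"

lemma XX_bx: "k < n \<Longrightarrow> XX n k = (\<Union>i\<in>{1..k}. \<Union>j\<in>{1..n} - {i}. bx n i j)"
  unfolding XX_def
proof (intro SUP_cong refl)
  fix i j assume "k < n" "i \<in> {1..k}" "j \<in> {1..n} - {i}"
  then show "realization n (interval_cube n {i} ({1..n} - {j})) = bx n i j"
    by (intro real_ic) auto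
qed

lemma cubes_XX:
  assumes kn: "k < n"
  shows "(elementary_cube n Q \<and> realization n Q \<subseteq> XX n k) \<longleftrightarrow> Q \<in> S0 n k"
proof
  assume Q: "elementary_cube n Q \<and> realization n Q \<subseteq> XX n k"
  define x :: point where "x = (\<lambda>m. if m \<in> {1..n} then (real_of_int (fst (Q m)) + real_of_int (snd (Q m))) / 2 else 0)"
  have d: "snd (Q m) - fst (Q m) \<in> {0,1}" if "m \<in> {1..n}" for m
    using Q that by (simp add: elementary_cube_def)
  have out: "Q m = (0,0)" if "m \<notin> {1..n}" for m
    using Q that by (simp add: elementary_cube_def)
  have "x \<in> realization n Q"
  proof -
    have "real_of_int (fst (Q m)) \<le> x m \<and> x m \<le> real_of_int (snd (Q m))" if "m \<in> {1..n}" for m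
    proof -
      have "fst (Q m) \<le> snd (Q m)" using d[OF that] by auto
      then have "real_of_int (fst (Q m)) \<le> real_of_int (snd (Q m))" by simp
      then show ?thesis using that by (simp add: x_def)
    qed
    then show ?thesis by (simp add: realization_def x_def)
  qed
  then have "x \<in> XX n k" using Q by auto
  then obtain i j where ij: "i \<in> {1..k}" "j \<in> {1..n} - {i}" "x \<in> bx n i j"
    unfolding XX_bx[OF kn] by blast
  have inn: "i \<in> {1..n}" using ij kn by auto
  have U: "Q \<in> UC n"
    unfolding UC_def
  proof (intro CollectI conjI ballI allI impI)
    fix m assume m: "m \<in> {1..n}"
    have "0 \<le> x m" "x m \<le> 1" using ij(3) m by (auto simp: bx_def)
    then have "(fst (Q m), snd (Q m)) \<in> {(0,0),(1,1),(0,1)}"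
      using m by (intro coord01 d) (auto simp: x_def)
    then show "Q m \<in> {(0,0),(1,1),(0,1)}" by simp
  next
    fix m assume "m \<notin> {1..n}" then show "Q m = (0,0)" by (rule out)
  qed
  have "x i = 1" using ij by (simp add: bx_def)
  then have "Q i = (1,1)"
  proof -
    have "Q i \<in> {(0,0),(1,1),(0,1)}" using U inn by (simp add: UC_def)
    then show ?thesis using \<open>x i = 1\<close> inn by (auto simp: x_def)
  qed
  moreover have "x j = 0" using ij by (simp add: bx_def)
  then have "Q j = (0,0)"
  proof -
    have "Q j \<in> {(0,0),(1,1),(0,1)}" using U ij by (simp add: UC_def)
    then show ?thesis using \<open>x j = 0\<close> ij by (auto simp: x_def)
  qed
  ultimately show "Q \<in> S0 n k" using U ij by (auto simp: S0_def)
next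
  assume Q: "Q \<in> S0 n k"
  then have U: "Q \<in> UC n" by (simp add: S0_def)
  obtain i j where ij: "i \<in> {1..k}" "Q i = (1,1)" "j \<in> {1..n}" "Q j = (0,0)"
    using Q by (auto simp: S0_def)
  have ne: "i \<noteq> j" using ij by auto
  have "elementary_cube n Q" using U by (auto simp: elementary_cube_def UC_def)
  moreover have "realization n Q \<subseteq> XX n k"
  proof
    fix x assume x: "x \<in> realization n Q"
    have "x \<in> bx n i j"
      unfolding bx_def
    proof (intro CollectI conjI ballI allI impI)
      fix m assume m: "m \<in> {1..n}"
      have "Q m \<in> {(0,0),(1,1),(0,1)}" using U m by (simp add: UC_def)
      moreover have "real_of_int (fst (Q m)) \<le> x m \<and> x m \<le> real_of_int (snd (Q m))"
        using x m by (simp add: realization_def)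
      ultimately show "0 \<le> x m" "x m \<le> 1" by auto
    next
      show "x i = 1" using x ij kn by (force simp: realization_def)
      show "x j = 0" using x ij kn by (force simp: realization_def)
    next
      fix m assume "m \<notin> {1..n}" then show "x m = 0" using x by (simp add: realization_def)
    qed
    moreover have "j \<in> {1..n} - {i}" using ij ne by auto
    ultimately show "x \<in> XX n k" unfolding XX_bx[OF kn] using ij(1) by blast
  qed
  ultimately show "elementary_cube n Q \<and> realization n Q \<subseteq> XX n k" by simp
qed



definition TT :: "nat \<Rightarrow> nat \<Rightarrow> nat \<Rightarrow> cube set" where
  "TT n k t = {Q\<in>UC n. Q n = (0,0) \<and> (\<exists>i\<in>{1..k}. Q i = (1,1)) \<and> (\<forall>m\<in>{1..<t}. Q m = (1,1))}"

lemma acyc_TT_n: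
  shows "acyc n (TT n k n)"
  unfolding acyc_def
proof (intro allI impI)
  fix i and c :: "cube \<Rightarrow> int" assume i: "1 \<le> i" and sc: "{Q. c Q \<noteq> 0} \<subseteq> {Q\<in>TT n k n. cube_dim n Q = i}"
  have "nondeg n Q = {}" if "Q \<in> TT n k n" for Q
  proof -
    have "Q m \<noteq> (0,1)" if "m \<in> {1..n}" for m
      using \<open>Q \<in> TT n k n\<close> that by (cases "m = n") (auto simp: TT_def)
    then show ?thesis using nondeg_UC[of Q n] that by (auto simp: TT_def)
  qed
  then have "{Q\<in>TT n k n. cube_dim n Q = i} = {}" using i by (auto simp: cube_dim_def)
  then have c0: "c = (\<lambda>_. 0)" using sc by auto
  show "\<exists>d. {Q. d Q \<noteq> 0} \<subseteq> {Q\<in>TT n k n. cube_dim n Q = Suc i} \<and> chain_boundary n d = c"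
    by (rule exI[of _ "\<lambda>_. 0"]) (simp add: c0 chain_boundary_def)
qed

lemma acyc_TT_step:
  assumes t: "1 \<le> t" "t < n" and a: "acyc n (TT n k (Suc t))"
  shows "acyc n (TT n k t)"
proof (rule step[where T = "TT n k (Suc t)" and r = t and v = 1])
  show "TT n k t \<subseteq> UC n" by (auto simp: TT_def)
  show "TT n k (Suc t) \<subseteq> TT n k t" by (auto simp: TT_def)
  show "t \<in> {1..n}" using t by auto
  show "(1::int) \<in> {0,1}" by simp
  show "acyc n (TT n k (Suc t))" by (rule a)
next
  fix Q assume Q: "Q \<in> TT n k t" "Q t = (1-1,1-1)"
  then have Qt: "Q t = (0,0)" by simp
  have U: "Q(t := (0,1)) \<in> UC n" using Q t by (intro UC_upd) (auto simp: TT_def)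
  obtain i where i: "i \<in> {1..k}" "Q i = (1,1)" using Q by (auto simp: TT_def)
  have "i \<noteq> t" using i Qt by auto
  then show "Q(t := (0,1)) \<in> TT n k t" using U Q i t by (auto simp: TT_def)
next
  fix Q assume Q: "Q \<in> TT n k t" "fst (Q t) = snd (Q t)"
  have U: "Q(t := (1,1)) \<in> UC n" using Q t by (intro UC_upd) (auto simp: TT_def)
  obtain i where i: "i \<in> {1..k}" "Q i = (1,1)" using Q by (auto simp: TT_def)
  have "(Q(t := (1,1))) i = (1,1)" using i by auto
  then show "Q(t := (1,1)) \<in> TT n k (Suc t)" using U Q i t by (auto simp: TT_def)
qed

lemma acyc_TT_aux: "\<forall>t. n - t = d \<longrightarrow> 1 \<le> t \<longrightarrow> t \<le> n \<longrightarrow> acyc n (TT n k t)"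
proof (induction d)
  case 0
  show ?case
  proof (intro allI impI)
    fix t assume t: "n - t = 0" "1 \<le> t" "t \<le> n"
    then have "t = n" by simp
    then show "acyc n (TT n k t)" using acyc_TT_n by simp
  qed
next
  case (Suc d)
  show ?case
  proof (intro allI impI)
    fix t assume t: "n - t = Suc d" "1 \<le> t" "t \<le> n"
    have "n - Suc t = d" "1 \<le> Suc t" "Suc t \<le> n" using t by auto
    then have "acyc n (TT n k (Suc t))" using Suc.IH by blast
    moreover have "t < n" using t by simp
    ultimately show "acyc n (TT n k t)" using t(2) acyc_TT_step by blast
  qed
qed

lemma acyc_TT: "1 \<le> t \<Longrightarrow> t \<le> n \<Longrightarrow> acyc n (TT n k t)"
  using acyc_TT_aux[where d = "n - t" and n = n and k = k] by simp

lemma acyc_S0: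
  assumes k: "1 \<le> k" "k < n"
  shows "acyc n (S0 n k)"
proof (rule step[where T = "TT n k 1" and r = n and v = 0])
  show "S0 n k \<subseteq> UC n" by (auto simp: S0_def)
  show "TT n k 1 \<subseteq> S0 n k" using k by (auto simp: TT_def S0_def)
  show "n \<in> {1..n}" using k by auto
  show "(0::int) \<in> {0,1}" by simp
  show "acyc n (TT n k 1)" using k by (intro acyc_TT) auto
next
  fix Q assume Q: "Q \<in> S0 n k" "Q n = (1-0,1-0)"
  have U: "Q(n := (0,1)) \<in> UC n" using Q k by (intro UC_upd) (auto simp: S0_def)
  obtain i j where ij: "i \<in> {1..k}" "Q i = (1,1)" "j \<in> {1..n}" "Q j = (0,0)" using Q by (auto simp: S0_def)
  have "i \<noteq> n" "j \<noteq> n" using ij k Q by auto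
  then show "Q(n := (0,1)) \<in> S0 n k" using U ij unfolding S0_def by auto
next
  fix Q assume Q: "Q \<in> S0 n k" "fst (Q n) = snd (Q n)"
  have U: "Q(n := (0,0)) \<in> UC n" using Q k by (intro UC_upd) (auto simp: S0_def)
  obtain i where ij: "i \<in> {1..k}" "Q i = (1,1)" using Q by (auto simp: S0_def)
  have "i \<noteq> n" using ij k by auto
  then show "Q(n := (0,0)) \<in> TT n k 1" using U ij unfolding TT_def by auto
qed


lemma seg01:
  fixes a b t :: real
  assumes "0 \<le> a" "a \<le> 1" "0 \<le> b" "b \<le> 1" "0 \<le> t" "t \<le> 1"
  shows "0 \<le> (1-t)*a + t*b \<and> (1-t)*a + t*b \<le> 1"
proof -
  have "(1-t)*a \<le> (1-t)" "t*b \<le> t" using assms by (simp_all add: mult_left_le)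
  moreover have "0 \<le> (1-t)*a" "0 \<le> t*b" using assms by simp_all
  ultimately show ?thesis by linarith
qed

lemma bx_conn: "connectedin (product_topology (\<lambda>_. euclideanreal) UNIV) (bx n i j)"
proof (rule path_connectedin_imp_connectedin, unfold path_connectedin, intro conjI ballI)
  show "bx n i j \<subseteq> topspace (product_topology (\<lambda>_. euclideanreal) UNIV)" by simp
next
  fix x y assume x: "x \<in> bx n i j" and y: "y \<in> bx n i j"
  define g where "g = (\<lambda>t::real. \<lambda>m. (1-t) * x m + t * y m)"
  have "pathin (product_topology (\<lambda>_. euclideanreal) UNIV) g"
    unfolding pathin_def continuous_map_componentwise_UNIV g_def
    by (auto intro!: continuous_intros)
  moreover have "g \<in> {0..1} \<rightarrow> bx n i j"
  proof
    fix t :: real assume t: "t \<in> {0..1}"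
    show "g t \<in> bx n i j"
      unfolding bx_def g_def
    proof (intro CollectI conjI ballI allI impI)
      fix m assume m: "m \<in> {1..n}"
      have "0 \<le> x m" "x m \<le> 1" "0 \<le> y m" "y m \<le> 1" using x y m by (auto simp: bx_def)
      then show "0 \<le> (1-t) * x m + t * y m" "(1-t) * x m + t * y m \<le> 1"
        using seg01 t by auto
    next
      show "(1-t) * x i + t * y i = 1" using x y by (simp add: bx_def algebra_simps)
      show "(1-t) * x j + t * y j = 0" using x y by (simp add: bx_def)
    next
      fix m assume "m \<notin> {1..n}" then show "(1-t) * x m + t * y m = 0" using x y by (simp add: bx_def)
    qed
  qed
  moreover have "g 0 = x" "g 1 = y" by (simp_all add: g_def)
  ultimately show "\<exists>g. pathin (product_topology (\<lambda>_. euclideanreal) UNIV) g \<and> g \<in> {0..1} \<rightarrow> bx n i j \<and> g 0 = x \<and> g 1 = y"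
    by blast
qed

lemma XX_conn:
  assumes n: "2 \<le> n" and k: "1 \<le> k" "k < n"
  shows "connectedin (product_topology (\<lambda>_. euclideanreal) UNIV) (XX n k)"
proof -
  define z :: point where "z = (\<lambda>m. if m \<in> {1..<n} then 1 else 0)"
  have C: "connectedin (product_topology (\<lambda>_. euclideanreal) UNIV) (\<Union> (bx n i ` ({1..n} - {i})))"
    if i: "i \<in> {1..k}" for i
  proof (rule connectedin_Union)
    fix S assume "S \<in> bx n i ` ({1..n} - {i})"
    then show "connectedin (product_topology (\<lambda>_. euclideanreal) UNIV) S" using bx_conn by auto
  next
    define e :: point where "e = (\<lambda>m. if m = i then 1 else 0)"
    have "e \<in> bx n i j" if "j \<in> {1..n} - {i}" for j
      using that i k by (auto simp: bx_def e_def)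
    then show "\<Inter> (bx n i ` ({1..n} - {i})) \<noteq> {}" by blast
  qed
  have zin: "z \<in> \<Union> (bx n i ` ({1..n} - {i}))" if i: "i \<in> {1..k}" for i
  proof -
    have "z \<in> bx n i n" using i k by (auto simp: bx_def z_def)
    moreover have "n \<in> {1..n} - {i}" using i k by auto
    ultimately show ?thesis by blast
  qed
  have "connectedin (product_topology (\<lambda>_. euclideanreal) UNIV) (\<Union>i\<in>{1..k}. \<Union> (bx n i ` ({1..n} - {i})))"
  proof (rule connectedin_Union)
    fix S assume "S \<in> (\<lambda>i. \<Union> (bx n i ` ({1..n} - {i}))) ` {1..k}"
    then show "connectedin (product_topology (\<lambda>_. euclideanreal) UNIV) S" using C by auto
  next
    show "\<Inter> ((\<lambda>i. \<Union> (bx n i ` ({1..n} - {i}))) ` {1..k}) \<noteq> {}" using zin by blast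
  qed
  then show ?thesis using XX_bx[OF k(2)] by simp
qed

theorem lemma3:
  fixes n k :: nat
  assumes "n \<ge> 2" and "k \<ge> 1" and "k < n"
  shows "acyclic_cubical n
           (\<Union>i\<in>{1..k}. \<Union>j\<in>{1..n} - {i}. realization n (interval_cube n {i} ({1..n} - {j})))"
proof -
  have X: "(\<Union>i\<in>{1..k}. \<Union>j\<in>{1..n} - {i}. realization n (interval_cube n {i} ({1..n} - {j}))) = XX n k"
    by (simp add: XX_def)
  have ne: "XX n k \<noteq> {}"
  proof -
    define z :: point where "z = (\<lambda>m. if m \<in> {1..<n} then 1 else 0)"
    have "z \<in> bx n 1 n" using assms by (auto simp: bx_def z_def)
    moreover have "n \<in> {1..n} - {1}" "(1::nat) \<in> {1..k}" using assms by auto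
    ultimately show ?thesis unfolding XX_bx[OF assms(3)] by blast
  qed
  have cub: "cubes_of n (XX n k) i = {Q\<in>S0 n k. cube_dim n Q = i}" for i
    using cubes_XX[OF assms(3)] by (auto simp: cubes_of_def)
  have H: "trivial_homology n (XX n k) i" if i: "1 \<le> i" for i
    unfolding trivial_homology_def
  proof (intro ballI impI)
    fix c assume c: "c \<in> chains n (XX n k) i" and cyc: "chain_boundary n c = (\<lambda>_. 0)"
    have "{Q. c Q \<noteq> 0} \<subseteq> {Q\<in>S0 n k. cube_dim n Q = i}" using c cub by (simp add: chains_def)
    then obtain d where d: "{Q. d Q \<noteq> 0} \<subseteq> {Q\<in>S0 n k. cube_dim n Q = Suc i}" "chain_boundary n d = c"
      using acyc_S0[OF assms(2,3)] i cyc unfolding acyc_def by blast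
    have "{Q. d Q \<noteq> 0} \<subseteq> UC n" using d(1) by (auto simp: S0_def)
    then have "finite {Q. d Q \<noteq> 0}" using finite_UC finite_subset by blast
    then have "d \<in> chains n (XX n k) (Suc i)" using d(1) cub by (simp add: chains_def)
    then show "\<exists>d\<in>chains n (XX n k) (Suc i). chain_boundary n d = c" using d(2) by blast
  qed
  show ?thesis unfolding X acyclic_cubical_def using ne XX_conn[OF assms] H by blast
qed

end
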